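(* Let $p$ be an odd prime, let $l\ge 3$ be an odd integer with $l\mid p-1$, and let $\omega$ be a primitive $l$-th root of unity in $\mathbb{F}_p$. Then the cyclic code $\mathcal{C}_1$ of length $lp$ over $\mathbb{F}_p$ generated by $g_1(x)=(x-1)^4(x-\omega)(x-\omega^2)$ is an AMDS symbol-pair code with minimum symbol-pair distance $7$.
   Context: For $\mathbf{x}=(x_0,\dots,x_{n-1})\in\mathbb{F}_p^n$, the symbol-pair distance is $D_p(\mathbf{x},\mathbf{y})=|\{i:(x_i,x_{i+1})\neq(y_i,y_{i+1})\}|$ (indices modulo $n$); the minimum symbol-pair distance $d_p$ is the minimum of $D_p$ over distinct codewords. A code $\mathcal{C}$ of length $n$ with minimum symbol-pair distance $d_p$ is an AMDS (almost MDS) symbol-pair code if $|\mathcal{C}|=p^{n-d_p+1}$. The cyclic code generated by $g(x)\mid x^n-1$ is the ideal $\langle g(x)\rangle$ in $\mathbb{F}_p[x]/\langle x^n-1\rangle$. *)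

theory Defs
  imports "HOL-Computational_Algebra.Polynomial"
begin

text \<open>A word of length n over a field is represented by a polynomial of degree < n;
  its i-th symbol is coeff c i (i < n). Indices are taken modulo n.\<close>

definition pair_dist :: "nat \<Rightarrow> 'a::zero poly \<Rightarrow> 'a poly \<Rightarrow> nat" where
  "pair_dist n x y = card {i. i < n \<and>
      (coeff x i, coeff x (Suc i mod n)) \<noteq> (coeff y i, coeff y (Suc i mod n))}"

text \<open>The cyclic code generated by g: the ideal <g> in F[x]/<x^n - 1>, each residue
  class represented by its remainder modulo x^n - 1.\<close>

definition cyclic_code :: "nat \<Rightarrow> 'a::field poly \<Rightarrow> 'a poly set" where
  "cyclic_code n g = {(a * g) mod (monom 1 n - 1) | a. True}"

definition min_pair_dist :: "nat \<Rightarrow> 'a::zero poly set \<Rightarrow> nat" where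
  "min_pair_dist n C = Min {pair_dist n x y | x y. x \<in> C \<and> y \<in> C \<and> x \<noteq> y}"

definition AMDS_pair_code :: "nat \<Rightarrow> 'a::{field,finite} poly set \<Rightarrow> nat \<Rightarrow> bool" where
  "AMDS_pair_code n (C :: 'a poly set) d \<longleftrightarrow>
     min_pair_dist n C = d \<and> card C = card (UNIV :: 'a set) ^ (n - d + 1)"

definition primitive_root_of_unity :: "nat \<Rightarrow> 'a::field \<Rightarrow> bool" where
  "primitive_root_of_unity l w \<longleftrightarrow>
     0 < l \<and> w ^ l = 1 \<and> (\<forall>k. 0 < k \<and> k < l \<longrightarrow> w ^ k \<noteq> 1)"

end

theory Submission
  imports "HOL-Number_Theory.Residues" Defs
begin

lemma char_eq_p:
  assumes "prime p" "card (UNIV :: 'a::{field,finite} set) = p"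
  shows "CHAR('a) = p"
proof -
  have "CHAR('a) dvd p" using CHAR_dvd_CARD[where 'a='a] assms by simp
  moreover have "CHAR('a) \<noteq> Suc 0" by simp
  ultimately show ?thesis using assms(1) by (auto simp add: prime_nat_iff)
qed

lemma of_nat_eq_iff_modp:
  assumes "CHAR('a::field) = p"
  shows "(of_nat i = (of_nat j :: 'a)) \<longleftrightarrow> i mod p = j mod p"
  using of_nat_eq_iff_cong_CHAR[where 'a='a] assms by (simp add: cong_def)

lemma of_nat_mod_n:
  assumes "of_nat n = (0::'a::comm_ring_1)"
  shows "(of_nat (a mod n) :: 'a) = of_nat a"
proof -
  have "a = (a div n) * n + a mod n" by simp
  hence "(of_nat a :: 'a) = of_nat (a div n) * of_nat n + of_nat (a mod n)"
    by (metis of_nat_add of_nat_mult)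
  thus ?thesis using assms by simp
qed

lemma pow_mod_n:
  assumes "w ^ n = (1::'a::comm_ring_1)"
  shows "w ^ (a mod n) = w ^ a"
proof -
  have "w ^ a = (w ^ n) ^ (a div n) * w ^ (a mod n)"
    by (metis div_mult_mod_eq power_add power_mult mult.commute)
  then show ?thesis using assms by simp
qed

lemma prim_pow_eq:
  assumes "primitive_root_of_unity l (w::'a::field)"
  shows "w ^ i = w ^ j \<longleftrightarrow> i mod l = j mod l"
proof
  have l: "0 < l" "w ^ l = 1" and pr: "\<And>k. 0 < k \<Longrightarrow> k < l \<Longrightarrow> w ^ k \<noteq> 1"
    using assms unfolding primitive_root_of_unity_def by auto
  have w0: "w \<noteq> 0" using l by (metis power_0_left zero_neq_one neq0_conv)
  assume h: "w ^ i = w ^ j"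
  have e: "w ^ (i mod l) = w ^ (j mod l)" using h pow_mod_n[OF l(2)] by metis
  show "i mod l = j mod l"
  proof (rule ccontr)
    assume ne: "i mod l \<noteq> j mod l"
    { fix a b :: nat assume ab: "a < b" "b < l" "w ^ a = w ^ b"
      have "w ^ b = w ^ a * w ^ (b - a)" using ab by (metis power_add le_add_diff_inverse less_imp_le)
      hence "w ^ (b - a) = 1" using ab w0 by simp
      hence False using pr[of "b - a"] ab by simp }
    thus False using ne e l(1)
      by (metis linorder_neqE_nat mod_less_divisor)
  qed
next
  have l: "0 < l" "w ^ l = 1"
    using assms unfolding primitive_root_of_unity_def by auto
  assume "i mod l = j mod l"
  thus "w ^ i = w ^ j" using pow_mod_n[OF l(2)] by metis
qed

definition xder :: "'a::idom poly \<Rightarrow> 'a poly" where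
  "xder q = [:0, 1:] * pderiv q"

lemma coeff_xder: "coeff (xder q) i = of_nat i * coeff q i"
  by (cases i) (simp_all add: xder_def coeff_pderiv)

lemma coeff_xder_pow: "coeff ((xder ^^ k) q) i = of_nat i ^ k * coeff q i"
  by (induction k) (simp_all add: coeff_xder)

lemma degree_xder_pow: "degree ((xder ^^ k) q) \<le> degree q"
  by (rule degree_le) (simp add: coeff_xder_pow coeff_eq_0)

lemma xder_dvd:
  assumes "[:-1, 1:] ^ Suc m dvd (q :: 'a::idom poly)"
  shows "[:-1, 1:] ^ m dvd xder q"
proof -
  obtain h where h: "q = [:-1, 1:] ^ Suc m * h" using assms by blast
  have "pderiv q = [:-1, 1:] ^ m * (smult (of_nat (Suc m)) h * pderiv [:-1,1:] + [:-1,1:] * pderiv h)"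
    unfolding h pderiv_mult pderiv_power_Suc by (simp add: algebra_simps)
  thus ?thesis unfolding xder_def by (metis dvd_mult dvd_triv_left)
qed

lemma xder_pow_dvd:
  "[:-1, 1:] ^ (m + k) dvd (q :: 'a::idom poly) \<Longrightarrow> [:-1, 1:] ^ m dvd (xder ^^ k) q"
proof (induction k arbitrary: q)
  case 0 then show ?case by simp
next
  case (Suc k)
  have "[:-1, 1:] ^ Suc (m + k) dvd q" using Suc.prems by simp
  hence "[:-1, 1:] ^ (m + k) dvd xder q" by (rule xder_dvd)
  hence "[:-1, 1:] ^ m dvd (xder ^^ k) (xder q)" by (rule Suc.IH)
  thus ?case by (simp add: funpow_Suc_right del: funpow.simps)
qed

lemma poly_sum_lessThan:
  fixes q :: "'a::comm_ring_1 poly"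
  assumes "degree q < n"
  shows "poly q x = (\<Sum>i<n. coeff q i * x ^ i)"
proof -
  have "poly q x = (\<Sum>i\<le>degree q. coeff q i * x ^ i)" by (rule poly_altdef)
  also have "\<dots> = (\<Sum>i<n. coeff q i * x ^ i)"
    by (rule sum.mono_neutral_left) (use assms in \<open>auto simp: coeff_eq_0\<close>)
  finally show ?thesis .
qed

lemma moments:
  fixes d :: "'a::field poly"
  assumes "[:-1, 1:] ^ 4 dvd d" "degree d < n" "k \<le> 3"
  shows "(\<Sum>i<n. coeff d i * of_nat i ^ k) = 0"
proof -
  have "[:-1, 1:] ^ (1 + k) dvd d"
    by (rule dvd_trans[OF le_imp_power_dvd assms(1)]) (use assms in auto)
  hence "[:-1, 1:] ^ 1 dvd (xder ^^ k) d" by (rule xder_pow_dvd)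
  hence "poly ((xder ^^ k) d) 1 = 0" by (simp add: poly_eq_0_iff_dvd)
  moreover have "degree ((xder ^^ k) d) < n" using degree_xder_pow[of k d] assms by linarith
  ultimately show ?thesis by (simp add: poly_sum_lessThan coeff_xder_pow mult.commute)
qed

lemma lincomb:
  fixes w \<phi> :: "nat \<Rightarrow> 'a::field"
  assumes "finite S" "\<forall>k\<le>m. (\<Sum>i\<in>S. w i * \<phi> i ^ k) = 0" "degree Q \<le> m"
  shows "(\<Sum>i\<in>S. w i * poly Q (\<phi> i)) = 0"
proof -
  have "\<And>x. poly Q x = (\<Sum>k<Suc m. coeff Q k * x ^ k)"
    using assms(3) by (intro poly_sum_lessThan) simp
  hence "(\<Sum>i\<in>S. w i * poly Q (\<phi> i)) = (\<Sum>i\<in>S. \<Sum>k<Suc m. coeff Q k * (w i * \<phi> i ^ k))"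
    by (simp add: sum_distrib_left algebra_simps)
  also have "\<dots> = (\<Sum>k<Suc m. coeff Q k * (\<Sum>i\<in>S. w i * \<phi> i ^ k))"
    by (subst sum.swap) (simp add: sum_distrib_left)
  also have "\<dots> = 0" using assms(2) by simp
  finally show ?thesis .
qed

lemma fibre:
  fixes w \<phi> :: "nat \<Rightarrow> 'a::field"
  assumes "finite S" "\<forall>k\<le>m. (\<Sum>i\<in>S. w i * \<phi> i ^ k) = 0" "card (\<phi> ` S) \<le> Suc m"
    and "r \<in> \<phi> ` S"
  shows "(\<Sum>i\<in>{i\<in>S. \<phi> i = r}. w i) = 0"
proof -
  define R where "R = \<phi> ` S - {r}"
  define Q where "Q = (\<Prod>s\<in>R. [:-s, 1:])"
  have fR: "finite R" using assms(1) by (simp add: R_def)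
  have "degree Q = (\<Sum>s\<in>R. degree [:-s, 1:])"
    unfolding Q_def by (rule degree_prod_eq_sum_degree) auto
  also have "\<dots> = card R" by simp
  also have "\<dots> \<le> m" using assms(3,4) fR unfolding R_def
    by (simp add: card_Diff_singleton)
  finally have dQ: "degree Q \<le> m" .
  have "(\<Sum>i\<in>S. w i * poly Q (\<phi> i)) = 0" by (rule lincomb[OF assms(1,2) dQ])
  moreover have "(\<Sum>i\<in>S. w i * poly Q (\<phi> i)) = (\<Sum>i\<in>{i\<in>S. \<phi> i = r}. w i * poly Q (\<phi> i))"
  proof (rule sum.mono_neutral_right)
    show "\<forall>i\<in>S - {i \<in> S. \<phi> i = r}. w i * poly Q (\<phi> i) = 0"
      using fR by (auto simp: Q_def R_def poly_prod)
  qed (use assms(1) in auto)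
  moreover have "(\<Sum>i\<in>{i\<in>S. \<phi> i = r}. w i * poly Q (\<phi> i)) = (\<Sum>i\<in>{i\<in>S. \<phi> i = r}. w i * poly Q r)"
    by (rule sum.cong) auto
  moreover have "poly Q r \<noteq> 0" using fR by (auto simp: Q_def R_def poly_prod)
  ultimately show ?thesis by (simp add: sum_distrib_right[symmetric])
qed

lemma pred_down:
  fixes x j n :: nat
  assumes "x \<in> S" "\<forall>i\<in>S. (i + n - 1) mod n \<in> S" "x < n"
  shows "j \<le> x \<Longrightarrow> x - j \<in> S"
proof (induction j)
  case 0 then show ?case using assms by simp
next
  case (Suc j)
  hence "x - j \<in> S" by simp
  hence "(x - j + n - 1) mod n \<in> S" using assms by blast
  moreover have "x - j + n - 1 = (x - Suc j) + n" using Suc.prems by simp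
  moreover have "(x - Suc j + n) mod n = x - Suc j" using assms(3) by simp
  ultimately show ?case by simp
qed

lemma closed_pred:
  fixes s n :: nat
  assumes "s \<in> S" "\<forall>i\<in>S. (i + n - 1) mod n \<in> S" "S \<subseteq> {..<n}"
  shows "{..<n} \<subseteq> S"
proof -
  have sn: "s < n" using assms by auto
  have "s - s \<in> S" by (rule pred_down[OF assms(1,2) sn]) simp
  hence "(0 + n - 1) mod n \<in> S" using assms(2) by fastforce
  hence n1: "n - 1 \<in> S" using sn by simp
  show ?thesis
  proof
    fix i assume "i \<in> {..<n}"
    hence "(n - 1) - (n - 1 - i) \<in> S" by (intro pred_down[OF n1 assms(2)]) auto
    thus "i \<in> S" using \<open>i \<in> {..<n}\<close> by simp
  qed
qed

lemma run5:
  assumes n5: "n > 5" and Sn: "S \<subseteq> {..<n}" and c5: "card S = 5"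
    and cE: "card {i\<in>S. Suc i mod n \<in> S} \<ge> 4"
  shows "\<exists>y<n. S = (\<lambda>j. (y + j) mod n) ` {..<5}"
proof -
  define \<sigma> where "\<sigma> = (\<lambda>i. Suc i mod n)"
  define \<pi> where "\<pi> = (\<lambda>i::nat. (i + n - 1) mod n)"
  define E where "E = {i\<in>S. \<sigma> i \<in> S}"
  define A where "A = {i\<in>S. \<pi> i \<notin> S}"
  have fS: "finite S" using Sn finite_subset by blast
  have sp: "\<sigma> (\<pi> i) = i" if "i < n" for i
  proof (cases i)
    case 0 then show ?thesis using that by (simp add: \<sigma>_def \<pi>_def)
  next
    case (Suc k)
    have "(i + n - 1) mod n = k" using that Suc by simp
    then show ?thesis using that Suc by (simp add: \<sigma>_def \<pi>_def)
  qed
  have ps: "\<pi> (\<sigma> i) = i" if "i < n" for i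
  proof (cases "Suc i = n")
    case True then show ?thesis using that by (simp add: \<sigma>_def \<pi>_def)
  next
    case False
    hence "Suc i mod n = Suc i" using that by simp
    then show ?thesis using that by (simp add: \<sigma>_def \<pi>_def)
  qed
  have inj: "inj_on \<sigma> {..<n}" by (metis inj_onI lessThan_iff ps)
  have "A \<noteq> {}"
  proof
    assume "A = {}"
    hence cl: "\<forall>i\<in>S. \<pi> i \<in> S" by (auto simp: A_def)
    obtain s where "s \<in> S" using c5 by fastforce
    hence "{..<n} \<subseteq> S" using closed_pred[of s S n] cl Sn by (simp add: \<pi>_def)
    hence "card {..<n} \<le> card S" using fS card_mono by blast
    thus False using c5 n5 by simp
  qed
  moreover have "card A \<le> 1"
  proof -
    have "\<sigma> ` E \<subseteq> S - A" using Sn ps by (auto simp: E_def A_def)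
    moreover have "card (\<sigma> ` E) = card E"
      by (rule card_image) (rule inj_on_subset[OF inj], use Sn E_def in auto)
    ultimately have "card E \<le> card (S - A)" using fS by (metis card_mono finite_Diff)
    moreover have "card (S - A) = card S - card A" using fS by (simp add: A_def card_Diff_subset finite_subset)
    moreover have "card A \<le> card S" using fS by (simp add: A_def card_mono)
    ultimately show ?thesis using cE c5 unfolding E_def \<sigma>_def by linarith
  qed
  moreover have "finite A" using fS by (simp add: A_def)
  ultimately have "card A = 1" by (simp add: card_gt_0_iff Suc_le_eq le_antisym)
  then obtain y where Ay: "A = {y}" by (rule card_1_singletonE)
  have yS: "y \<in> S" "\<pi> y \<notin> S" using Ay by (auto simp: A_def)
  have yn: "y < n" using yS Sn by auto
  have cover: "s \<in> (\<lambda>j. (y + j) mod n) ` {..<5}" if sS: "s \<in> S" for s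
  proof -
    have sn: "s < n" using sS Sn by auto
    define b where "b = (\<lambda>j. (s + n - j) mod n)"
    have "\<exists>j<5. b j = y"
    proof (rule ccontr)
      assume nn: "\<not> (\<exists>j<5. b j = y)"
      have bS: "j \<le> 5 \<Longrightarrow> b j \<in> S" for j
      proof (induction j)
        case 0 then show ?case using sS sn by (simp add: b_def)
      next
        case (Suc j)
        hence bj: "b j \<in> S" by simp
        have "b j \<noteq> y" using nn Suc.prems by simp
        hence "b j \<notin> A" using Ay by simp
        hence "\<pi> (b j) \<in> S" using bj by (simp add: A_def)
        moreover have "\<pi> (b j) = b (Suc j)"
        proof -
          have "\<pi> (b j) = ((s + n - j) mod n + n - 1) mod n" by (simp add: \<pi>_def b_def)
          also have "\<dots> = ((s + n - j) + (n - 1)) mod n"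
            using n5 by (metis Nat.add_diff_assoc One_nat_def Suc_leI gr_implies_not0 mod_add_left_eq neq0_conv)
          also have "(s + n - j) + (n - 1) = (s + n - Suc j) + n" using Suc.prems n5 by simp
          finally show ?thesis by (simp add: b_def)
        qed
        ultimately show ?case by simp
      qed
      have "inj_on b {..5}"
      proof (rule inj_onI)
        fix i j assume ij: "i \<in> {..5}" "j \<in> {..5}" "b i = b j"
        have "(s + n - i) mod n = (s + n - j) mod n" using ij by (simp add: b_def)
        hence "[s + n - i = s + n - j] (mod n)" by (simp add: cong_def)
        hence "[s + n - i + i + j = s + n - j + i + j] (mod n)" by (intro cong_add) auto
        hence "[j + (s + n) = i + (s + n)] (mod n)" using ij n5 by (simp add: add.commute add.left_commute)
        hence "[j = i] (mod n)" using cong_add_rcancel_nat by blast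
        thus "i = j" using ij n5 by (simp add: cong_def)
      qed
      hence "card (b ` {..5}) = 6" by (simp add: card_image)
      moreover have "b ` {..5} \<subseteq> S" using bS by auto
      ultimately have "6 \<le> card S" using fS by (metis card_mono)
      thus False using c5 by simp
    qed
    then obtain j where j: "j < 5" "(s + n - j) mod n = y" by (auto simp: b_def)
    have "(y + j) mod n = ((s + n - j) mod n + j) mod n" using j by simp
    also have "\<dots> = (s + n - j + j) mod n" by (simp add: mod_add_left_eq)
    also have "\<dots> = s" using j n5 sn by simp
    finally show ?thesis using j by force
  qed
  have "S \<subseteq> (\<lambda>j. (y + j) mod n) ` {..<5}" using cover by blast
  moreover have "card ((\<lambda>j. (y + j) mod n) ` {..<5}) \<le> 5" using card_image_le[of "{..<5::nat}"] by simp
  ultimately have "S = (\<lambda>j. (y + j) mod n) ` {..<5}" using c5 by (metis card_seteq finite_imageI finite_lessThan)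
  thus ?thesis using yn by blast
qed

lemma sum5: "(\<Sum>j<(5::nat). f j) = f 0 + f 1 + f 2 + f 3 + (f 4 :: 'a::comm_monoid_add)"
  by (simp add: eval_nat_numeral add.assoc)

lemma test5:
  fixes a :: "nat \<Rightarrow> 'a::field" and Y :: 'a
  assumes h: "\<And>Q. degree Q \<le> 3 \<Longrightarrow> (\<Sum>j<5. a j * poly Q (Y + of_nat j)) = 0"
  shows "6 * (a 4 - a 0) = 0" "6 * (a 1 + 4 * a 0) = 0" "2 * (a 2 - 6 * a 0) = 0" "2 * (a 3 + 4 * a 0) = 0"
proof -
  define Q where "Q = (\<lambda>u v w. [:-(Y+u),1:] * [:-(Y+v),1:] * [:-(Y+w),1:])"
  have dQ: "degree (Q u v w) \<le> 3" for u v w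
    unfolding Q_def by (rule order.trans[OF degree_mult_le]) (use degree_mult_le[of "[:-(Y+u),1:]" "[:-(Y+v),1:]"] in auto)
  have pQ: "poly (Q u v w) x = (x - Y - u) * (x - Y - v) * (x - Y - w)" for u v w x
    by (simp add: Q_def algebra_simps)
  have "(\<Sum>j<5. a j * poly (Q 1 2 3) (Y + of_nat j)) = 0" by (rule h[OF dQ])
  thus "6 * (a 4 - a 0) = 0" unfolding sum5 pQ by (simp add: algebra_simps) (simp add: neg_eq_iff_add_eq_0)?
  have "(\<Sum>j<5. a j * poly (Q 2 3 4) (Y + of_nat j)) = 0" by (rule h[OF dQ])
  thus "6 * (a 1 + 4 * a 0) = 0" unfolding sum5 pQ by (simp add: algebra_simps) (simp add: neg_eq_iff_add_eq_0)?
  have "(\<Sum>j<5. a j * poly (Q 1 3 4) (Y + of_nat j)) = 0" by (rule h[OF dQ])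
  thus "2 * (a 2 - 6 * a 0) = 0" unfolding sum5 pQ by (simp add: algebra_simps) (simp add: neg_eq_iff_add_eq_0)?
  have "(\<Sum>j<5. a j * poly (Q 1 2 4) (Y + of_nat j)) = 0" by (rule h[OF dQ])
  thus "2 * (a 3 + 4 * a 0) = 0" unfolding sum5 pQ by (simp add: algebra_simps) (simp add: neg_eq_iff_add_eq_0)?
qed

lemma lower_bound:
  fixes d :: "'a::field poly" and \<omega> :: 'a
  assumes ch: "CHAR('a) = p" and pp: "prime p" and p7: "p \<ge> 7"
    and nl: "n = l * p" and l3: "l \<ge> 3" and lodd: "odd l" and prim: "primitive_root_of_unity l \<omega>"
    and cop: "coprime l p"
    and d0: "d \<noteq> 0" and dn: "degree d < n"
    and d1: "[:-1,1:]^4 dvd d" and dw1: "poly d \<omega> = 0" and dw2: "poly d (\<omega>^2) = 0"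
  shows "7 \<le> card {i. i < n \<and> (coeff d i \<noteq> 0 \<or> coeff d (Suc i mod n) \<noteq> 0)}"
proof (rule ccontr)
  assume neg7: "\<not> 7 \<le> card {i. i < n \<and> (coeff d i \<noteq> 0 \<or> coeff d (Suc i mod n) \<noteq> 0)}"
  define S where "S = {i. i < n \<and> coeff d i \<noteq> 0}"
  define P where "P = {i. i < n \<and> coeff d (Suc i mod n) \<noteq> 0}"
  define \<sigma> where "\<sigma> = (\<lambda>i. Suc i mod n)"
  define \<pi> where "\<pi> = (\<lambda>i::nat. (i + n - 1) mod n)"
  define \<rho> where "\<rho> = (\<lambda>i::nat. of_nat i :: 'a)"
  have T: "{i. i < n \<and> (coeff d i \<noteq> 0 \<or> coeff d (Suc i mod n) \<noteq> 0)} = S \<union> P"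
    by (auto simp: S_def P_def)
  have cT: "card (S \<union> P) \<le> 6" using neg7 T by simp
  have n21: "n \<ge> 21" using nl l3 p7 mult_le_mono[OF l3 p7] by simp
  have fS: "finite S" "finite P" by (auto simp: S_def P_def)
  have Sn: "S \<subseteq> {..<n}" by (auto simp: S_def)
  have inS: "i \<in> S \<longleftrightarrow> i < n \<and> coeff d i \<noteq> 0" for i by (simp add: S_def)
  have inP: "i \<in> P \<longleftrightarrow> i < n \<and> \<sigma> i \<in> S" for i
    using n21 by (auto simp: S_def P_def \<sigma>_def)
  have sp: "\<sigma> (\<pi> i) = i" if "i < n" for i
  proof (cases i)
    case 0 then show ?thesis using that by (simp add: \<sigma>_def \<pi>_def)
  next
    case (Suc k)
    have "(i + n - 1) mod n = k" using that Suc by simp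
    then show ?thesis using that Suc by (simp add: \<sigma>_def \<pi>_def)
  qed
  have ps: "\<pi> (\<sigma> i) = i" if "i < n" for i
  proof (cases "Suc i = n")
    case True then show ?thesis using that by (simp add: \<sigma>_def \<pi>_def)
  next
    case False
    hence "Suc i mod n = Suc i" using that by simp
    then show ?thesis using that by (simp add: \<sigma>_def \<pi>_def)
  qed
  have \<sigma>n: "\<sigma> i < n" for i using n21 by (simp add: \<sigma>_def)
  have \<pi>n: "\<pi> i < n" for i using n21 by (simp add: \<pi>_def)
  have inj: "inj_on \<sigma> {..<n}" by (metis inj_onI lessThan_iff ps)
  have "\<sigma> ` P = S"
  proof
    show "\<sigma> ` P \<subseteq> S" using inP by auto
    show "S \<subseteq> \<sigma> ` P"
    proof
      fix s assume "s \<in> S"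
      hence "\<pi> s \<in> P" "\<sigma> (\<pi> s) = s" using inP sp \<pi>n Sn by auto
      thus "s \<in> \<sigma> ` P" by force
    qed
  qed
  moreover have "inj_on \<sigma> P" using inj by (rule inj_on_subset) (auto simp: inP)
  ultimately have cP: "card P = card S" by (metis card_image)
  have cSP: "card (S \<inter> P) + card (S \<union> P) = card S + card P"
    using card_Un_Int[OF fS] by linarith
  have cSU: "card S \<le> card (S \<union> P)" using fS by (intro card_mono) auto
  have cS6: "card S \<le> 6" using cT cSU by linarith
  have p0: "of_nat p = (0::'a)" using ch of_nat_CHAR[where 'a='a] by simp
  have n0: "of_nat n = (0::'a)" using p0 nl by simp
  have \<rho>\<sigma>: "\<rho> (\<sigma> i) = \<rho> i + 1" for i
    using of_nat_mod_n[OF n0, of "Suc i"] by (simp add: \<rho>_def \<sigma>_def)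
  have \<rho>eq: "\<rho> i = \<rho> j \<longleftrightarrow> i mod p = j mod p" for i j
    using of_nat_eq_iff_modp[OF ch] by (simp add: \<rho>_def)
  have nz: "(of_nat k :: 'a) \<noteq> 0" if "0 < k" "k < p" for k
    using that ch by (simp add: of_nat_eq_0_iff_char_dvd nat_dvd_not_less)
  have two: "(2::'a) \<noteq> 0" using nz[of 2] p7 by simp
  have three: "(3::'a) \<noteq> 0" using nz[of 3] p7 by simp
  have one_two: "(1::'a) \<noteq> 2" using two by (metis one_add_one add_cancel_right_right one_neq_zero)
  have wl: "\<omega> ^ l = 1" using prim by (simp add: primitive_root_of_unity_def)
  have wn: "\<omega> ^ n = 1" using wl nl by (simp add: power_mult)
  have weq: "\<omega> ^ i = \<omega> ^ j \<longleftrightarrow> i mod l = j mod l" for i j by (rule prim_pow_eq[OF prim])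
  have w0: "\<omega> \<noteq> 0" using wl l3 by (metis power_0_left zero_neq_one not_numeral_le_zero)
  have w1: "\<omega> \<noteq> 1" using weq[of 1 0] l3 by simp
  have w12: "\<omega> \<noteq> \<omega>^2" using weq[of 1 2] l3 by simp
  have w\<sigma>: "\<omega> ^ (\<sigma> i) = \<omega> * \<omega> ^ i" for i
    using pow_mod_n[OF wn, of "Suc i"] by (simp add: \<sigma>_def)
  have same: "i = j" if "i < n" "j < n" "\<rho> i = \<rho> j" "\<omega> ^ i = \<omega> ^ j" for i j
  proof -
    have "[i = j] (mod p)" "[i = j] (mod l)" using that \<rho>eq weq by (auto simp: cong_def)
    hence "[i = j] (mod l * p)" using cop coprime_cong_mult_nat by blast
    thus ?thesis using that nl by (simp add: cong_def)
  qed
  have sq: "\<omega> ^ i = \<omega> ^ j" if "(\<omega> ^ i)^2 = (\<omega> ^ j)^2" for i j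
  proof -
    have "\<omega> ^ (2 * i) = \<omega> ^ (2 * j)" using that by (simp add: power_mult mult.commute)
    hence "[2 * i = 2 * j] (mod l)" using weq by (simp add: cong_def)
    moreover have "coprime 2 l" using lodd by simp
    ultimately have "[i = j] (mod l)" using cong_mult_lcancel_nat by blast
    thus ?thesis using weq by (simp add: cong_def)
  qed
  have sumS: "(\<Sum>i<n. coeff d i * f i) = (\<Sum>i\<in>S. coeff d i * f i)" for f
    by (rule sum.mono_neutral_right) (auto simp: S_def)
  have MS: "\<forall>k\<le>3. (\<Sum>i\<in>S. coeff d i * \<rho> i ^ k) = 0"
    using moments[OF d1 dn] sumS by (simp add: \<rho>_def)
  have WS: "\<forall>k\<le>2. (\<Sum>i\<in>S. coeff d i * (\<omega> ^ i) ^ k) = 0"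
  proof (intro allI impI)
    fix k :: nat assume "k \<le> 2"
    hence "k = 0 \<or> k = 1 \<or> k = 2" by auto
    moreover have "(\<Sum>i\<in>S. coeff d i * (\<omega> ^ i) ^ 0) = 0" using MS by auto
    moreover have "(\<Sum>i\<in>S. coeff d i * (\<omega> ^ i) ^ 1) = 0"
      using dw1 poly_sum_lessThan[OF dn, of \<omega>] sumS by simp
    moreover have "(\<Sum>i\<in>S. coeff d i * (\<omega> ^ i) ^ 2) = 0"
      using dw2 poly_sum_lessThan[OF dn, of "\<omega>^2"] sumS
      by (simp add: power_mult[symmetric] mult.commute[of 2])
    ultimately show "(\<Sum>i\<in>S. coeff d i * (\<omega> ^ i) ^ k) = 0" by auto
  qed
  have Sne: "S \<noteq> {}"
  proof -
    have "coeff d (degree d) \<noteq> 0" using d0 by simp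
    thus ?thesis using dn by (auto simp: S_def)
  qed
  show False
  proof (cases "card S \<ge> 6")
    case True
    hence "card S = card (S \<union> P)" using cT cSU by linarith
    hence "S = S \<union> P" using fS by (intro card_subset_eq) auto
    hence "P \<subseteq> S" by blast
    have "\<forall>i\<in>S. \<pi> i \<in> S"
    proof
      fix i assume "i \<in> S"
      hence "\<pi> i \<in> P" using inP sp[of i] \<pi>n Sn by auto
      thus "\<pi> i \<in> S" using \<open>P \<subseteq> S\<close> by blast
    qed
    hence "\<forall>i\<in>S. (i + n - 1) mod n \<in> S" by (simp add: \<pi>_def)
    moreover obtain s where "s \<in> S" using Sne by auto
    ultimately have "{..<n} \<subseteq> S" using closed_pred[of s S n] Sn by blast
    hence "card {..<n} \<le> card S" using fS by (intro card_mono) auto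
    hence "n \<le> card S" by simp
    thus False using cS6 n21 by simp
  next
    case False
    note cS = False
    show False
    proof (cases "card S = 5")
      case True
      have "card (S \<inter> P) \<ge> 4" using cSP cP cT True by simp
      moreover have "S \<inter> P = {i\<in>S. Suc i mod n \<in> S}" using inP Sn by (auto simp: \<sigma>_def)
      ultimately obtain y where yn: "y < n" and Sy: "S = (\<lambda>j. (y + j) mod n) ` {..<5}"
        using run5[of n S] n21 Sn True by auto
      define e where "e = (\<lambda>j. (y + j) mod n)"
      define a where "a = (\<lambda>j. coeff d (e j))"
      have inje: "inj_on e {..<5}"
      proof (rule inj_onI)
        fix i j assume ij: "i \<in> {..<5::nat}" "j \<in> {..<5::nat}" "e i = e j"
        hence "[y + i = y + j] (mod n)" by (simp add: e_def cong_def)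
        hence "[i = j] (mod n)" by (metis cong_add_lcancel_nat)
        thus "i = j" using ij n21 by (simp add: cong_def)
      qed
      have Se: "S = e ` {..<5}" using Sy by (simp add: e_def)
      have \<rho>e: "\<rho> (e j) = \<rho> y + of_nat j" for j
        using of_nat_mod_n[OF n0, of "y + j"] by (simp add: \<rho>_def e_def)
      have we: "\<omega> ^ (e j) = \<omega> ^ y * \<omega> ^ j" for j
        using pow_mod_n[OF wn, of "y + j"] by (simp add: e_def power_add)
      have reidx: "(\<Sum>i\<in>S. coeff d i * f i) = (\<Sum>j<5. a j * f (e j))" for f
        unfolding Se a_def by (simp add: sum.reindex[OF inje])
      have h: "(\<Sum>j<5. a j * poly Q (\<rho> y + of_nat j)) = 0" if "degree Q \<le> 3" for Q
        using lincomb[OF fS(1) MS that] reidx[of "\<lambda>i. poly Q (\<rho> i)"] by (simp add: \<rho>e)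
      note eqs = test5[OF h]
      have six: "(6::'a) \<noteq> 0" using two three by (metis mult_eq_0_iff num_double numeral_times_numeral)
      have "a 4 - a 0 = 0" using eqs(1) six mult_eq_0_iff by blast
      hence a4: "a 4 = a 0" by simp
      have "a 1 + 4 * a 0 = 0" using eqs(2) six mult_eq_0_iff by blast
      hence a1: "a 1 = - 4 * a 0" by (simp add: eq_neg_iff_add_eq_0)
      have "a 2 - 6 * a 0 = 0" using eqs(3) two mult_eq_0_iff by blast
      hence a2: "a 2 = 6 * a 0" by simp
      have "a 3 + 4 * a 0 = 0" using eqs(4) two mult_eq_0_iff by blast
      hence a3: "a 3 = - 4 * a 0" by (simp add: eq_neg_iff_add_eq_0)
      have "(\<Sum>j<5. a j * (\<omega> ^ (e j)) ^ 1) = 0" using WS[rule_format, of 1] reidx[of "\<lambda>i. (\<omega> ^ i) ^ 1"] by simp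
      moreover have "(\<Sum>j<5. a j * (\<omega> ^ (e j)) ^ 1) = \<omega> ^ y * (a 0 * (\<omega> - 1) ^ 4)"
        unfolding sum5 we a1 a2 a3 a4
        by (simp add: algebra_simps power4_eq_xxxx power3_eq_cube power2_eq_square)
      ultimately have "\<omega> ^ y * (a 0 * (\<omega> - 1) ^ 4) = 0" by simp
      hence "a 0 = 0" using w0 w1 by simp
      moreover have "e 0 \<in> S" using Se by auto
      ultimately show False using inS by (simp add: a_def)
    next
      case False
      hence cS4: "card S \<le> 4" using cS cS6 by simp
      have cR: "card (\<rho> ` S) \<le> Suc 3" using card_image_le[OF fS(1), of \<rho>] cS4 by simp
      have fib: "(\<Sum>i\<in>{i\<in>S. \<rho> i = r}. coeff d i) = 0" if "r \<in> \<rho> ` S" for r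
        using fibre[OF fS(1) _ cR that, of "coeff d"] MS by simp
      have partner: "\<exists>j\<in>S. j \<noteq> i \<and> \<rho> j = \<rho> i" if "i \<in> S" for i
      proof (rule ccontr)
        assume "\<not> ?thesis"
        hence "{j\<in>S. \<rho> j = \<rho> i} = {i}" using that by auto
        hence "coeff d i = 0" using fib[of "\<rho> i"] that by simp
        thus False using that inS by simp
      qed
      show False
      proof (cases "card S \<le> 3")
        case True
        have allr: "\<rho> i = \<rho> j" if ij: "i \<in> S" "j \<in> S" for i j
        proof (rule ccontr)
          assume ne: "\<rho> i \<noteq> \<rho> j"
          obtain i' where i': "i' \<in> S" "i' \<noteq> i" "\<rho> i' = \<rho> i" using partner[OF ij(1)] by auto
          obtain j' where j': "j' \<in> S" "j' \<noteq> j" "\<rho> j' = \<rho> j" using partner[OF ij(2)] by auto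
          have "{i, i', j, j'} \<subseteq> S" using ij i' j' by auto
          moreover have "i \<noteq> j" "i \<noteq> j'" "i' \<noteq> j" "i' \<noteq> j'" using ne i' j' by metis+
          hence "card {i, i', j, j'} = 4" using i' j' by simp
          ultimately have "4 \<le> card S" using fS by (metis card_mono)
          thus False using True by simp
        qed
        have injw: "inj_on (\<lambda>i. \<omega> ^ i) S"
        proof (rule inj_onI)
          fix x y assume xy: "x \<in> S" "y \<in> S" "\<omega> ^ x = \<omega> ^ y"
          have "\<rho> x = \<rho> y" by (rule allr[OF xy(1,2)])
          moreover have "x < n" "y < n" using xy Sn by auto
          ultimately show "x = y" using same xy(3) by blast
        qed
        have cW: "card ((\<lambda>i. \<omega> ^ i) ` S) \<le> Suc 2" using card_image[OF injw] True by simp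
        obtain i0 where i0: "i0 \<in> S" using Sne by auto
        have "(\<Sum>i\<in>{i\<in>S. \<omega> ^ i = \<omega> ^ i0}. coeff d i) = 0"
          using fibre[OF fS(1) WS cW] i0 by auto
        moreover have "{i\<in>S. \<omega> ^ i = \<omega> ^ i0} = {i0}" using injw i0 by (auto dest: inj_onD)
        ultimately show False using i0 inS by simp
      next
        case False
        hence c4: "card S = 4" using cS4 by simp
        hence "card (S \<inter> P) \<ge> 2" using cSP cP cT by simp
        moreover have fSP: "finite (S \<inter> P)" using fS by simp
        ultimately obtain s where s1: "s \<in> S \<inter> P" by (metis card.empty ex_in_conv not_numeral_le_zero)
        have "card (S \<inter> P - {s}) \<ge> 1" using \<open>card (S \<inter> P) \<ge> 2\<close> s1 fSP by (simp add: card_Diff_singleton)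
        then obtain t where "t \<in> S \<inter> P - {s}" by (metis card.empty ex_in_conv not_one_le_zero)
        hence st: "s \<in> S \<inter> P" "t \<in> S \<inter> P" "s \<noteq> t" using s1 by auto
        have sS: "s \<in> S" "t \<in> S" "\<sigma> s \<in> S" "\<sigma> t \<in> S" using st inP by auto
        define u where "u = \<rho> s"
        have u1: "u \<noteq> u + 1" by simp
        define F0 where "F0 = {i\<in>S. \<rho> i = u}"
        define F1 where "F1 = {i\<in>S. \<rho> i = u + 1}"
        have c0: "card F0 \<ge> 2"
        proof -
          obtain s' where "s' \<in> S" "s' \<noteq> s" "\<rho> s' = \<rho> s" using partner[OF sS(1)] by auto
          hence "{s, s'} \<subseteq> F0" using sS by (auto simp: F0_def u_def)
          moreover have "finite F0" using fS by (simp add: F0_def)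
          ultimately have "card {s, s'} \<le> card F0" by (intro card_mono)
          thus ?thesis using \<open>s' \<noteq> s\<close> by simp
        qed
        have c1: "card F1 \<ge> 2"
        proof -
          obtain s' where "s' \<in> S" "s' \<noteq> \<sigma> s" "\<rho> s' = \<rho> (\<sigma> s)" using partner[OF sS(3)] by auto
          hence "{\<sigma> s, s'} \<subseteq> F1" using sS \<rho>\<sigma> by (auto simp: F1_def u_def)
          moreover have "finite F1" using fS by (simp add: F1_def)
          ultimately have "card {\<sigma> s, s'} \<le> card F1" by (intro card_mono)
          thus ?thesis using \<open>s' \<noteq> \<sigma> s\<close> by simp
        qed
        have "F0 \<inter> F1 = {}" by (auto simp: F0_def F1_def)
        hence "card (F0 \<union> F1) = card F0 + card F1" using fS by (simp add: F0_def F1_def card_Un_disjoint)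
        moreover have "F0 \<union> F1 \<subseteq> S" by (auto simp: F0_def F1_def)
        ultimately have "F0 \<union> F1 = S" using c0 c1 c4 fS
          by (intro card_seteq) auto
        hence two_cls: "\<rho> i = u \<or> \<rho> i = u + 1" if "i \<in> S" for i
          using that by (auto simp: F0_def F1_def)
        have rt: "\<rho> t = u"
        proof (rule ccontr)
          assume "\<rho> t \<noteq> u"
          hence "\<rho> t = u + 1" using two_cls sS by blast
          hence "u + 2 = u \<or> u + 2 = u + 1" using two_cls[OF sS(4)] \<rho>\<sigma>[of t]
            by (simp add: add.assoc one_add_one)
          thus False using two one_two by auto
        qed
        have rr: "\<rho> s = u" "\<rho> t = u" "\<rho> (\<sigma> s) = u + 1" "\<rho> (\<sigma> t) = u + 1"
          using rt \<rho>\<sigma> by (auto simp: u_def)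
        have "\<sigma> s \<noteq> \<sigma> t" using inj st sS Sn by (auto dest: inj_onD)
        moreover have "s \<noteq> \<sigma> s" "s \<noteq> \<sigma> t" "t \<noteq> \<sigma> s" "t \<noteq> \<sigma> t"
          using rr u1 by metis+
        ultimately have dist: "s \<noteq> \<sigma> s" "s \<noteq> \<sigma> t" "t \<noteq> \<sigma> s" "t \<noteq> \<sigma> t" "\<sigma> s \<noteq> \<sigma> t"
          by auto
        have S4: "S = {s, t, \<sigma> s, \<sigma> t}"
        proof -
          have "{s, t, \<sigma> s, \<sigma> t} \<subseteq> S" using sS by auto
          moreover have "card {s, t, \<sigma> s, \<sigma> t} = 4" using dist st by auto
          ultimately show ?thesis using c4 fS by (metis card_seteq order_refl)
        qed
        have F0e: "{i\<in>S. \<rho> i = u} = {s, t}" using S4 rt \<rho>\<sigma> u1 by (auto simp: u_def)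
        have F1e: "{i\<in>S. \<rho> i = u + 1} = {\<sigma> s, \<sigma> t}" using S4 rt \<rho>\<sigma> u1 by (auto simp: u_def)
        have e0: "coeff d s + coeff d t = 0"
          using fib[of u] F0e sS st by (simp add: u_def)
        have e1: "coeff d (\<sigma> s) + coeff d (\<sigma> t) = 0"
        proof -
          have "u + 1 \<in> \<rho> ` S" using rr(3) sS(3) by (metis image_eqI)
          thus ?thesis using fib[of "u + 1"] F1e dist by simp
        qed
        define A where "A = coeff d s"
        define B where "B = coeff d (\<sigma> s)"
        have ct: "coeff d t = - A" using e0 by (simp add: A_def eq_neg_iff_add_eq_0 add.commute)
        have c\<sigma>t: "coeff d (\<sigma> t) = - B" using e1 by (simp add: B_def eq_neg_iff_add_eq_0 add.commute)
        have sum4: "(\<Sum>i\<in>S. f i) = f s + f t + f (\<sigma> s) + f (\<sigma> t)" for f :: "nat \<Rightarrow> 'a"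
          unfolding S4 using dist st by (simp add: add.assoc)
        have XY: "\<omega> ^ s \<noteq> \<omega> ^ t" using same[of s t] st sS Sn rt u_def by auto
        have XY2: "(\<omega> ^ s)^2 \<noteq> (\<omega> ^ t)^2" using XY sq by blast
        have "(\<Sum>i\<in>S. coeff d i * (\<omega> ^ i) ^ 1) = 0" using WS[rule_format, of 1] by simp
        hence "(A + \<omega> * B) * (\<omega> ^ s - \<omega> ^ t) = 0"
          unfolding sum4 w\<sigma> ct c\<sigma>t by (simp add: A_def B_def algebra_simps)
        hence q1: "A + \<omega> * B = 0" using XY by simp
        have "(\<Sum>i\<in>S. coeff d i * (\<omega> ^ i) ^ 2) = 0" using WS[rule_format, of 2] by simp
        hence "(A + \<omega>^2 * B) * ((\<omega> ^ s)^2 - (\<omega> ^ t)^2) = 0"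
          unfolding sum4 w\<sigma> ct c\<sigma>t by (simp add: A_def B_def algebra_simps power2_eq_square)
        hence q2: "A + \<omega>^2 * B = 0" using XY2 by simp
        have "(\<omega> - \<omega>^2) * B = (A + \<omega> * B) - (A + \<omega>^2 * B)" by (simp add: algebra_simps)
        hence "(\<omega> - \<omega>^2) * B = 0" using q1 q2 by simp
        hence "B = 0" using w12 by simp
        thus False using sS inS by (simp add: B_def)
      qed
    qed
  qed
qed

lemma two_roots:
  fixes q :: "'a::field poly"
  assumes "poly q u = 0" "poly q v = 0" "u \<noteq> v"
  shows "[:-u,1:] * [:-v,1:] dvd q"
proof -
  obtain h where h: "q = [:-u,1:] * h" using assms(1) poly_eq_0_iff_dvd by blast
  have "poly h v = 0" using assms(2,3) h by simp
  then obtain h2 where "h = [:-v,1:] * h2" using poly_eq_0_iff_dvd by blast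
  hence "q = ([:-u,1:] * [:-v,1:]) * h2" using h by (simp only: mult.assoc)
  thus ?thesis by (rule dvdI)
qed

lemma g_dvd:
  fixes N :: "'a::field poly"
  assumes "[:-1,1:]^4 dvd N" "poly N w = 0" "poly N (w^2) = 0"
    and "w \<noteq> 1" "w^2 \<noteq> 1" "w \<noteq> w^2"
  shows "[:-1, 1:] ^ 4 * [:-w, 1:] * [:-(w ^ 2), 1:] dvd N"
proof -
  obtain h where h: "N = [:-1,1:]^4 * h" using assms(1) by blast
  have "poly h w = 0" using assms(2,4) h by simp
  moreover have "poly h (w^2) = 0" using assms(3,5) h by simp
  ultimately have "[:-w,1:] * [:-(w^2),1:] dvd h" using assms(6) by (rule two_roots)
  hence "[:-1,1:]^4 * ([:-w,1:] * [:-(w^2),1:]) dvd [:-1,1:]^4 * h" by (rule mult_dvd_mono[OF dvd_refl])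
  thus ?thesis using h by (simp only: mult.assoc)
qed

lemma xpm_dvd:
  fixes m :: nat
  assumes ch: "CHAR('a::field) = p" and pp: "prime p" and p4: "p \<ge> 4" and po: "odd p"
  shows "[:-1,1:]^4 dvd (monom 1 (p * m) - 1 :: 'a poly)"
proof -
  have chp: "CHAR('a poly) = p" using ch by simp
  have pc: "prime CHAR('a poly)" using chp pp by simp
  have "(monom (1::'a) m + (-1)) ^ CHAR('a poly) = monom 1 m ^ CHAR('a poly) + (-1) ^ CHAR('a poly)"
    by (rule freshmans_dream[OF pc]) simp
  hence fd: "(monom (1::'a) m + (-1)) ^ p = monom 1 m ^ p + (-1) ^ p" by (simp only: chp)
  have m1: "(-1::'a poly) ^ p = -1" using po by simp
  have m2: "monom (1::'a) m ^ p = monom 1 (p * m)" by (simp add: monom_power mult.commute)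
  have e: "monom 1 (p * m) - 1 = (monom (1::'a) m - 1) ^ p" using fd m1 m2 by simp
  have "poly (monom (1::'a) m - 1) 1 = 0" by (simp add: poly_monom)
  hence "[:-1,1:] dvd (monom (1::'a) m - 1)" using poly_eq_0_iff_dvd by blast
  hence h1: "[:-1,1:]^p dvd (monom (1::'a) m - 1) ^ p" by (rule dvd_power_same)
  have h2: "[:-1,1:]^4 dvd ([:-1,1:]^p :: 'a poly)" using p4 by (rule le_imp_power_dvd)
  have "[:-1,1:]^4 dvd (monom (1::'a) m - 1) ^ p" by (rule dvd_trans[OF h2 h1])
  thus ?thesis by (simp only: e)
qed

lemma card_polys:
  fixes m :: nat
  assumes "m > 0"
  shows "card {q :: 'a::{comm_ring_1,finite} poly. degree q < m} = card (UNIV :: 'a set) ^ m"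
    and "finite {q :: 'a::{comm_ring_1,finite} poly. degree q < m}"
proof -
  define F where "F = (\<lambda>q::'a poly. restrict (coeff q) {..<m})"
  have bij: "bij_betw F {q. degree q < m} ({..<m} \<rightarrow>\<^sub>E (UNIV :: 'a set))"
  proof (rule bij_betw_imageI)
    show "inj_on F {q. degree q < m}"
    proof (rule inj_onI)
      fix q r :: "'a poly" assume qr: "q \<in> {q. degree q < m}" "r \<in> {q. degree q < m}" "F q = F r"
      show "q = r"
      proof (rule poly_eqI)
        fix i show "coeff q i = coeff r i"
        proof (cases "i < m")
          case True thus ?thesis using qr(3) by (metis F_def lessThan_iff restrict_apply')
        next
          case False thus ?thesis using qr(1,2) by (simp add: coeff_eq_0)
        qed
      qed
    qed
    show "F ` {q. degree q < m} = {..<m} \<rightarrow>\<^sub>E UNIV"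
    proof
      show "F ` {q. degree q < m} \<subseteq> {..<m} \<rightarrow>\<^sub>E UNIV" unfolding F_def by (intro image_subsetI) simp
      show "{..<m} \<rightarrow>\<^sub>E UNIV \<subseteq> F ` {q. degree q < m}"
      proof
        fix f :: "nat \<Rightarrow> 'a" assume f: "f \<in> {..<m} \<rightarrow>\<^sub>E UNIV"
        define q where "q = Poly (map f [0..<m])"
        have cq: "coeff q i = (if i < m then f i else 0)" for i
          by (simp add: q_def nth_default_def)
        have "degree q \<le> m - 1" by (rule degree_le) (auto simp: cq)
        hence "degree q < m" using assms by simp
        moreover have "F q = f"
        proof
          fix i show "F q i = f i"
          proof (cases "i < m")
            case True thus ?thesis by (simp add: F_def cq)
          next
            case False
            hence "f i = undefined" using f by (intro PiE_arb[of f "{..<m}"]) auto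
            thus ?thesis using False by (simp add: F_def)
          qed
        qed
        ultimately show "f \<in> F ` {q. degree q < m}" by (intro image_eqI[of f F q]) auto
      qed
    qed
  qed
  have "card ({..<m} \<rightarrow>\<^sub>E (UNIV :: 'a set)) = (\<Prod>i<m. card (UNIV :: 'a set))"
    by (rule card_PiE) simp
  hence "card ({..<m} \<rightarrow>\<^sub>E (UNIV :: 'a set)) = card (UNIV :: 'a set) ^ m" by simp
  moreover have "card {q :: 'a poly. degree q < m} = card ({..<m} \<rightarrow>\<^sub>E (UNIV :: 'a set))"
    by (rule bij_betw_same_card[OF bij])
  ultimately show "card {q :: 'a poly. degree q < m} = card (UNIV :: 'a set) ^ m" by simp
  have "finite ({..<m} \<rightarrow>\<^sub>E (UNIV :: 'a set))" by (rule finite_PiE) auto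
  thus "finite {q :: 'a poly. degree q < m}" using bij_betw_finite[OF bij] by simp
qed

theorem theorem3p11:
  fixes p l :: nat and \<omega> :: "'a::{field,finite}"
  assumes "prime p" and "odd p" and "card (UNIV :: 'a set) = p"
    and "odd l" and "l \<ge> 3" and "l dvd p - 1"
    and "primitive_root_of_unity l \<omega>"
  shows "AMDS_pair_code (l * p)
           (cyclic_code (l * p) ([:-1, 1:] ^ 4 * [:-\<omega>, 1:] * [:-(\<omega> ^ 2), 1:])) 7"
proof -
  note pp = assms(1) and po = assms(2) and cardp = assms(3) and lodd = assms(4)
    and l3 = assms(5) and ldvd = assms(6) and prim = assms(7)
  define n where "n = l * p"
  define g where "g = [:-1, 1:] ^ 4 * [:-\<omega>, 1:] * [:-(\<omega> ^ 2), 1:]"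
  define M where "M = (monom 1 n - 1 :: 'a poly)"
  define C where "C = cyclic_code n g"
  have ch: "CHAR('a) = p" by (rule char_eq_p[OF pp cardp])
  have p1: "p > 1" using pp prime_gt_1_nat by blast
  have "2 dvd p - 1" using po p1 by simp
  moreover have "l dvd p - 1" by (rule ldvd)
  moreover have "coprime 2 l" using lodd by simp
  ultimately have "2 * l dvd p - 1" by (rule divides_mult)
  hence "2 * l \<le> p - 1" using p1 by (intro dvd_imp_le) auto
  hence p7: "p \<ge> 7" and lp: "l < p" using l3 by auto
  have "\<not> p dvd l" using lp l3 by (auto dest: dvd_imp_le)
  hence cop: "coprime l p" using prime_imp_coprime[OF pp] by (simp add: coprime_commute)
  have n21: "n \<ge> 21" using mult_le_mono[OF l3 p7] by (simp add: n_def)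
  have weq: "\<omega> ^ i = \<omega> ^ j \<longleftrightarrow> i mod l = j mod l" for i j by (rule prim_pow_eq[OF prim])
  have w1: "\<omega> \<noteq> 1" using weq[of 1 0] l3 by simp
  have w21: "\<omega>^2 \<noteq> 1" using weq[of 2 0] l3 by simp
  have w12: "\<omega> \<noteq> \<omega>^2" using weq[of 1 2] l3 by simp
  have wl: "\<omega> ^ l = 1" using prim by (simp add: primitive_root_of_unity_def)
  have wn: "\<omega> ^ n = 1" using wl by (simp add: n_def power_mult)
  have w2n: "(\<omega>^2) ^ n = 1" using wn by (metis power_mult power_mult_distrib mult.commute power_one)
  have gM: "g dvd M"
  proof -
    have "[:-1,1:]^4 dvd (monom 1 (p * l) - 1 :: 'a poly)"
      by (rule xpm_dvd[OF ch pp _ po]) (use p7 in simp)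
    hence "[:-1,1:]^4 dvd M" by (simp add: M_def n_def mult.commute)
    moreover have "poly M \<omega> = 0" "poly M (\<omega>^2) = 0" using wn w2n by (simp_all add: M_def poly_monom)
    ultimately show ?thesis unfolding g_def using w1 w21 w12 by (intro g_dvd) auto
  qed
  have degM: "degree M = n"
  proof -
    have "M = monom 1 n + (-1)" by (simp add: M_def)
    also have "degree \<dots> = n" using n21 by (subst degree_add_eq_left) (auto simp: degree_monom_eq)
    finally show ?thesis .
  qed
  have M0: "M \<noteq> 0" using degM n21 by auto
  have nz: "([:-1,1:]^4::'a poly) \<noteq> 0" "[:-\<omega>,1:] \<noteq> 0" "[:-(\<omega>^2),1:] \<noteq> 0" by simp_all
  have nz2: "[:-1,1:]^4 * [:-\<omega>,1:] \<noteq> 0" using nz by (simp only: mult_eq_0_iff) blast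
  have g0: "g \<noteq> 0" using nz nz2 by (simp only: g_def mult_eq_0_iff) blast
  have d4: "degree ([:-1,1:]^4::'a poly) = 4" by (rule degree_linear_power)
  have "degree g = degree ([:-1,1:]^4 * [:-\<omega>,1:]) + degree [:-(\<omega>^2),1:]"
    unfolding g_def by (rule degree_mult_eq[OF nz2 nz(3)])
  also have "degree ([:-1,1:]^4 * [:-\<omega>,1:]) = 4 + degree [:-\<omega>,1:]"
    using degree_mult_eq[OF nz(1,2)] d4 by simp
  finally have degg: "degree g = 6" by simp
  have Cchar: "C = {c. degree c < n \<and> g dvd c}"
  proof
    show "C \<subseteq> {c. degree c < n \<and> g dvd c}"
    proof
      fix c assume "c \<in> C"
      then obtain q where c: "c = (q * g) mod M" by (auto simp: C_def cyclic_code_def M_def)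
      have "degree c < n"
        using degree_mod_less[OF M0, of "q * g"] degM n21 c by auto
      moreover have "g dvd c" unfolding c using gM by (simp add: dvd_mod_iff)
      ultimately show "c \<in> {c. degree c < n \<and> g dvd c}" by simp
    qed
    show "{c. degree c < n \<and> g dvd c} \<subseteq> C"
    proof
      fix c assume "c \<in> {c. degree c < n \<and> g dvd c}"
      hence c: "degree c < n" "g dvd c" by auto
      then obtain q where q: "c = g * q" by blast
      have "c = (q * g) mod M" using c(1) degM q by (simp add: mod_poly_less mult.commute)
      thus "c \<in> C" by (auto simp: C_def cyclic_code_def M_def)
    qed
  qed
  have Cimg: "C = (\<lambda>q. q * g) ` {q. degree q < n - 6}"
  proof
    show "C \<subseteq> (\<lambda>q. q * g) ` {q. degree q < n - 6}"
    proof
      fix c assume "c \<in> C"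
      hence c: "degree c < n" "g dvd c" using Cchar by auto
      then obtain q where q: "c = g * q" by blast
      have "degree q < n - 6"
      proof (cases "q = 0")
        case True thus ?thesis using n21 by simp
      next
        case False
        hence "degree c = 6 + degree q" using q g0 degg by (simp add: degree_mult_eq)
        thus ?thesis using c by simp
      qed
      thus "c \<in> (\<lambda>q. q * g) ` {q. degree q < n - 6}" using q by (auto simp: mult.commute)
    qed
    show "(\<lambda>q. q * g) ` {q. degree q < n - 6} \<subseteq> C"
    proof
      fix c assume "c \<in> (\<lambda>q. q * g) ` {q. degree q < n - 6}"
      then obtain q where q: "c = q * g" "degree q < n - 6" by auto
      have "degree c < n"
      proof (cases "q = 0")
        case True thus ?thesis using q n21 by simp
      next
        case False
        hence "degree c = degree q + 6" using q g0 degg by (simp add: degree_mult_eq)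
        thus ?thesis using q by simp
      qed
      thus "c \<in> C" using Cchar q by auto
    qed
  qed
  have injg: "inj_on (\<lambda>q. q * g) {q. degree q < n - 6}"
    by (rule inj_onI) (use g0 in simp)
  have cardC: "card C = p ^ (n - 6)"
    using card_image[OF injg] card_polys(1)[of "n - 6", where 'a='a] n21 cardp Cimg by simp
  have finC: "finite C" using Cimg card_polys(2)[of "n - 6", where 'a='a] n21 by simp
  have pd: "pair_dist n x y = card {i. i < n \<and> (coeff (x - y) i \<noteq> 0 \<or> coeff (x - y) (Suc i mod n) \<noteq> 0)}" for x y :: "'a poly"
    unfolding pair_dist_def by (rule arg_cong[where f=card], rule Collect_cong) (simp add: coeff_diff)
  have lb: "7 \<le> pair_dist n x y" if "x \<in> C" "y \<in> C" "x \<noteq> y" for x y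
  proof -
    have x: "degree x < n" "g dvd x" and y: "degree y < n" "g dvd y" using that Cchar by auto
    define d where "d = x - y"
    have d0: "d \<noteq> 0" using that by (simp add: d_def)
    have dn: "degree d < n" using x y by (simp add: d_def degree_diff_less)
    have gd: "g dvd d" using x y by (simp add: d_def dvd_diff)
    have "[:-1,1:]^4 dvd g" unfolding g_def by (intro dvd_mult2 dvd_triv_left)
    hence d1: "[:-1,1:]^4 dvd d" using gd by (rule dvd_trans)
    have "[:-\<omega>,1:] dvd g" unfolding g_def by (intro dvd_mult2 dvd_triv_right)
    hence "[:-\<omega>,1:] dvd d" using gd by (rule dvd_trans)
    hence dw1: "poly d \<omega> = 0" by (simp add: poly_eq_0_iff_dvd)
    have "[:-(\<omega>^2),1:] dvd g" unfolding g_def by (rule dvd_triv_right)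
    hence "[:-(\<omega>^2),1:] dvd d" using gd by (rule dvd_trans)
    hence dw2: "poly d (\<omega>^2) = 0" by (simp add: poly_eq_0_iff_dvd)
    have "7 \<le> card {i. i < n \<and> (coeff d i \<noteq> 0 \<or> coeff d (Suc i mod n) \<noteq> 0)}"
      by (rule lower_bound[OF ch pp p7 n_def l3 lodd prim cop d0 dn d1 dw1 dw2])
    thus ?thesis using pd by (simp add: d_def)
  qed
  obtain x y where xy: "p * x = l * y + gcd p l" using bezout_nat[of p l] p1 by auto
  moreover have "gcd p l = 1" using cop by (simp add: coprime_commute coprime_iff_gcd_eq_1)
  ultimately have xy1: "p * x = l * y + 1" by simp
  define k where "k = y mod p"
  have "p dvd l * y + 1" unfolding xy1[symmetric] by simp
  hence "(l * y + 1) mod p = 0" by simp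
  moreover have "(l * k + 1) mod p = (l * y + 1) mod p" unfolding k_def
    by (metis mod_add_left_eq mod_mult_right_eq)
  ultimately have kc: "p dvd l * k + 1" using mod_eq_0_iff_dvd by metis
  have kp: "k < p" using p1 by (simp add: k_def)
  have k0: "k \<noteq> 0"
  proof
    assume "k = 0"
    hence "p dvd 1" using kc by simp
    thus False using p1 by simp
  qed
  define b where "b = l * k"
  define a where "a = n - 1 - b"
  have "k \<le> p - 1" using kp by simp
  hence "l * k \<le> l * (p - 1)" by (rule mult_le_mono2)
  moreover have "l * (p - 1) + l = l * p"
  proof -
    obtain q where "p = Suc q" using p1 by (cases p) auto
    thus ?thesis by simp
  qed
  ultimately have bn: "b + l \<le> n" unfolding b_def n_def by linarith
  have ab: "a + b + 1 = n" using bn l3 by (simp add: a_def)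
  have a1: "a \<ge> 2" using bn l3 by (simp add: a_def)
  have b1: "b \<ge> 3" using k0 l3 mult_le_mono[of 3 l 1 k] by (simp add: b_def)
  have "p dvd a"
  proof -
    have "p dvd a + (b + 1)" using ab by (simp add: n_def add.assoc)
    moreover have "p dvd b + 1" using kc by (simp add: b_def)
    ultimately show ?thesis using dvd_add_left_iff[of p "b + 1" a] by (simp add: add.commute)
  qed
  then obtain m where am: "a = p * m" by blast
  define c where "c = (monom 1 a - 1) * (monom 1 b - 1 :: 'a poly)"
  have ab': "a + b = n - 1" using ab by simp
  have cexp: "c = monom 1 (n - 1) - monom 1 a - monom 1 b + 1"
  proof -
    have "c = monom 1 a * monom 1 b - monom 1 a - monom 1 b + 1" by (simp add: c_def algebra_simps)
    also have "monom 1 a * monom (1::'a) b = monom 1 (n - 1)" using ab' by (simp add: mult_monom)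
    finally show ?thesis .
  qed
  have coeffc: "coeff c i = (if n - 1 = i then 1 else 0) - (if a = i then 1 else 0) - (if b = i then 1 else 0) + (if i = 0 then 1 else 0)" for i
    unfolding cexp by simp
  have supp: "coeff c i \<noteq> 0 \<Longrightarrow> i = 0 \<or> i = a \<or> i = b \<or> i = n - 1" for i
    using coeffc[of i] by (auto split: if_splits)
  have c0: "coeff c 0 = 1" using coeffc[of 0] a1 b1 n21 by simp
  hence cn0: "c \<noteq> 0" by auto
  have degc: "degree c < n"
  proof -
    have "degree c \<le> n - 1" by (rule degree_le) (use supp ab in fastforce)
    thus ?thesis using n21 by simp
  qed
  have gc: "g dvd c"
  proof -
    have "[:-1,1:]^4 dvd (monom 1 a - 1 :: 'a poly)" unfolding am
      by (rule xpm_dvd[OF ch pp _ po]) (use p7 in simp)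
    hence h4: "[:-1,1:]^4 dvd c" unfolding c_def by (rule dvd_mult2)
    have wb: "\<omega> ^ b = 1" using wl by (simp add: b_def power_mult)
    have wb2: "(\<omega>^2) ^ b = 1" using wb by (metis power_mult mult.commute power_one)
    have "poly c \<omega> = 0" "poly c (\<omega>^2) = 0" using wb wb2 by (simp_all add: c_def poly_monom)
    thus ?thesis unfolding g_def using h4 w1 w21 w12 by (intro g_dvd) auto
  qed
  have cC: "c \<in> C" using Cchar degc gc by simp
  have zC: "0 \<in> C" using Cchar n21 by simp
  have pw: "pair_dist n c 0 \<le> 7"
  proof -
    have "{i. i < n \<and> (coeff c i \<noteq> 0 \<or> coeff c (Suc i mod n) \<noteq> 0)} \<subseteq> set [0, a, b, n - 1, a - 1, b - 1, n - 2]"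
    proof
      fix i assume "i \<in> {i. i < n \<and> (coeff c i \<noteq> 0 \<or> coeff c (Suc i mod n) \<noteq> 0)}"
      hence i: "i < n" "coeff c i \<noteq> 0 \<or> coeff c (Suc i mod n) \<noteq> 0" by auto
      show "i \<in> set [0, a, b, n - 1, a - 1, b - 1, n - 2]"
      proof (cases "coeff c i \<noteq> 0")
        case True thus ?thesis using supp by auto
      next
        case False
        hence s: "Suc i mod n = 0 \<or> Suc i mod n = a \<or> Suc i mod n = b \<or> Suc i mod n = n - 1"
          using i supp by blast
        show ?thesis
        proof (cases "Suc i = n")
          case True thus ?thesis by auto
        next
          case False
          hence "Suc i mod n = Suc i" using i by simp
          thus ?thesis using s by auto
        qed
      qed
    qed
    hence "card {i. i < n \<and> (coeff c i \<noteq> 0 \<or> coeff c (Suc i mod n) \<noteq> 0)} \<le> card (set [0, a, b, n - 1, a - 1, b - 1, n - 2])"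
      by (intro card_mono) auto
    also have "\<dots> \<le> 7" using card_length[of "[0, a, b, n - 1, a - 1, b - 1, n - 2]"] by simp
    finally show ?thesis using pd[of c 0] by simp
  qed
  have p7c: "pair_dist n c 0 = 7" using pw lb[OF cC zC cn0] by simp
  define D where "D = {pair_dist n x y | x y. x \<in> C \<and> y \<in> C \<and> x \<noteq> y}"
  have finD: "finite D"
  proof -
    have "D \<subseteq> (\<lambda>(x, y). pair_dist n x y) ` (C \<times> C)" by (auto simp: D_def)
    thus ?thesis using finC finite_subset by blast
  qed
  have "Min D = 7"
  proof (rule Min_eqI[OF finD])
    show "\<And>z. z \<in> D \<Longrightarrow> 7 \<le> z" using lb by (auto simp: D_def)
    show "7 \<in> D" unfolding D_def using cC zC cn0 p7c by force
  qed
  hence "min_pair_dist n C = 7" by (simp add: min_pair_dist_def D_def)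
  moreover have "card C = card (UNIV :: 'a set) ^ (n - 7 + 1)"
    using cardC cardp n21 by (simp add: Suc_diff_Suc numeral_eq_Suc)
  ultimately show ?thesis unfolding AMDS_pair_code_def C_def g_def n_def by simp
qed

end
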